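(* Let $P\ge1$ be an integer and let $r\in\mathbb{F}_q[t]$ be monic with $\rho=\deg(r)\le P$. Then $$I_r=\begin{cases}\dfrac{|r|^nq^{n+1}}{q^{2P}}\displaystyle\sum_{k=0}^{P-\rho-1}q^{nk}\,S_{t^{P-\rho-k-1}}(f)&\text{if }\rho\le P-1,\\[2mm] q^{P(n-2)}&\text{if }\rho=P.\end{cases}$$
   Context: $q$ is a power of an odd prime $p$, $n\ge1$, and $f=a_1x_1^2+\dots+a_nx_n^2$ with $a_1,\dots,a_n\in\mathbb{F}_q^\times$. $K_\infty=\mathbb{F}_q((1/t))$ is the field of Laurent series $\alpha=\sum_{i\le M}c_it^i$ ($c_i\in\mathbb{F}_q$); $\mathrm{ord}(\alpha)$ is the largest $i$ with $c_i\ne0$, $|\alpha|=q^{\mathrm{ord}(\alpha)}$, $|0|=0$, and for vectors $|\boldsymbol\alpha|=\max_i|\alpha_i|$. $\mathbb{T}=\{\alpha\in K_\infty:|\alpha|<1\}$, and $d\theta$ is the Haar measure on $K_\infty$ normalised so that $\mathbb{T}$ has measure $1$. The character $\psi:K_\infty\to\mathbb{C}^\times$ is $\psi(\sum_{i\le M}c_it^i)=\exp(2\pi i\,\mathrm{Tr}_{\mathbb{F}_q/\mathbb{F}_p}(c_{-1})/p)$. For $\alpha\in K_\infty$, $S(\alpha)=\sum_{\mathbf{x}\in\mathbb{F}_q[t]^n,\,|\mathbf{x}|<q^P}\psi(\alpha f(\mathbf{x}))$, and $I_r=\int_{\{\theta\in\mathbb{T}:|\theta|<1/(|r|q^P)\}}S(\theta)\,d\theta$.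 For $a,r\in\mathbb{F}_q[t]$, $r\ne0$, $S_{a,r}(f)=\sum_{\mathbf{b}\in\mathbb{F}_q[t]^n,\,|\mathbf{b}|<|r|}\psi(af(\mathbf{b})/r)$, and for monic $r$, $S_r(f)=\sum_{a\in\mathbb{F}_q[t],\,|a|<|r|,\,\gcd(a,r)=1}S_{a,r}(f)$ (so $S_1(f)=1$). *)

theory Defs
  imports "HOL-Probability.Probability" "HOL-Computational_Algebra.Computational_Algebra"
begin

text \<open>The completion K_infinity = F_q((1/t)) is modelled by formal Laurent series 'a fls in the
 variable X = 1/t: the coefficient of t^i of alpha is  fls_nth alpha (-i).\<close>

definition qq :: "'a::{finite,field} itself \<Rightarrow> real" where
  "qq _ = real CARD('a)"

definition fdeg :: "'a::{finite,field} itself \<Rightarrow> nat" where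
  "fdeg _ = (THE e. CHAR('a) ^ e = CARD('a))"

definition ftrace :: "'a::{finite,field} \<Rightarrow> 'a" where
  "ftrace c = (\<Sum>i<fdeg TYPE('a). c ^ (CHAR('a) ^ i))"

text \<open>The trace as an integer in 0..p-1 (the trace lies in the prime field).\<close>
definition ftrace_nat :: "'a::{finite,field} \<Rightarrow> nat" where
  "ftrace_nat c = (THE k. k < CHAR('a) \<and> of_nat k = ftrace c)"

text \<open>The character psi on K_infinity: exp(2 pi i Tr(c_{-1})/p), c_{-1} the coefficient of t^{-1}.\<close>
definition psi :: "'a::{finite,field} fls \<Rightarrow> complex" where
  "psi \<alpha> = exp (2 * pi * \<i> * of_nat (ftrace_nat (fls_nth \<alpha> 1)) / of_nat CHAR('a))"

definition poly_to_fls :: "'a::{finite,field} poly \<Rightarrow> 'a fls" where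
  "poly_to_fls p = (\<Sum>j\<le>degree p. fls_const (coeff p j) * fls_X_inv ^ j)"

definition ls_abs :: "'a::{finite,field} fls \<Rightarrow> real" where
  "ls_abs \<alpha> = (if \<alpha> = 0 then 0 else qq TYPE('a) powr (real_of_int (- fls_subdegree \<alpha>)))"

definition poly_abs :: "'a::{finite,field} poly \<Rightarrow> real" where
  "poly_abs b = ls_abs (poly_to_fls b)"

definition fquad :: "(nat \<Rightarrow> 'a::{finite,field}) \<Rightarrow> nat \<Rightarrow> (nat \<Rightarrow> 'a poly) \<Rightarrow> 'a poly" where
  "fquad a n x = (\<Sum>i<n. smult (a i) (x i ^ 2))"

definition pvecs :: "nat \<Rightarrow> real \<Rightarrow> (nat \<Rightarrow> 'a::{finite,field} poly) set" where
  "pvecs n B = PiE {..<n} (\<lambda>_. {b. poly_abs b < B})"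

definition Ssum :: "(nat \<Rightarrow> 'a::{finite,field}) \<Rightarrow> nat \<Rightarrow> nat \<Rightarrow> 'a fls \<Rightarrow> complex" where
  "Ssum a n P \<alpha> = (\<Sum>x\<in>pvecs n (qq TYPE('a) ^ P). psi (\<alpha> * poly_to_fls (fquad a n x)))"

definition Sar :: "(nat \<Rightarrow> 'a::{finite,field}) \<Rightarrow> nat \<Rightarrow> 'a poly \<Rightarrow> 'a poly \<Rightarrow> complex" where
  "Sar a n c r = (\<Sum>b\<in>pvecs n (poly_abs r).
      psi (poly_to_fls (c * fquad a n b) / poly_to_fls r))"

definition Sr :: "(nat \<Rightarrow> 'a::{finite,field}) \<Rightarrow> nat \<Rightarrow> 'a poly \<Rightarrow> complex" where
  "Sr a n r = (\<Sum>c\<in>{c. poly_abs c < poly_abs r \<and> coprime c r}. Sar a n c r)"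

text \<open>T = {|alpha| < 1} is identified with digit sequences d, alpha = sum_i d_i t^{-(i+1)};
 the Haar measure on T (total mass 1) is the product of uniform probability measures on F_q.\<close>
definition digits_to_fls :: "(nat \<Rightarrow> 'a::{finite,field}) \<Rightarrow> 'a fls" where
  "digits_to_fls d = fls_X * fps_to_fls (Abs_fps d)"

definition haarT :: "(nat \<Rightarrow> 'a::{finite,field}) measure" where
  "haarT = PiM UNIV (\<lambda>_. uniform_count_measure UNIV)"

definition Ir :: "(nat \<Rightarrow> 'a::{finite,field}) \<Rightarrow> nat \<Rightarrow> nat \<Rightarrow> 'a poly \<Rightarrow> complex" where
  "Ir a n P r = set_lebesgue_integral haarT
      {d. ls_abs (digits_to_fls d) < 1 / (poly_abs r * qq TYPE('a) ^ P)}
      (\<lambda>d. Ssum a n P (digits_to_fls d))"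

end

theory Submission
  imports Defs
begin


lemma card_ge2: "CARD('a::{finite,field}) \<ge> 2"
proof -
  have "card {0::'a, 1} = 2" by simp
  moreover have "card {0::'a, 1} \<le> CARD('a)" by (rule card_mono) auto
  ultimately show ?thesis by simp
qed

lemma qq_gt1: "qq TYPE('a::{finite,field}) > 1"
  using card_ge2[where 'a='a] by (simp add: qq_def)

lemma poly_to_fls_nth:
  "fls_nth (poly_to_fls (p::'a::{finite,field} poly)) k = (if k \<le> 0 then coeff p (nat (-k)) else 0)"
proof -
  have "fls_nth (poly_to_fls p) k = (\<Sum>j\<le>degree p. coeff p j * (if k = - int j then 1 else 0))"
    by (simp add: poly_to_fls_def fls_nth_sum)
  also have "\<dots> = (\<Sum>j\<in>{..degree p}. if j = nat (-k) \<and> k \<le> 0 then coeff p j else 0)"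
    by (rule sum.cong) auto
  also have "\<dots> = (if k \<le> 0 then coeff p (nat (-k)) else 0)"
    by (auto simp: coeff_eq_0)
  finally show ?thesis .
qed

lemma ls_abs_less_iff:
  "ls_abs (\<alpha>::'a::{finite,field} fls) < qq TYPE('a) powr (real_of_int e) \<longleftrightarrow> (\<forall>k \<le> -e. fls_nth \<alpha> k = 0)"
proof (cases "\<alpha> = 0")
  case True
  then show ?thesis using qq_gt1[where 'a='a] by (simp add: ls_abs_def)
next
  case False
  have "ls_abs \<alpha> = qq TYPE('a) powr (real_of_int (- fls_subdegree \<alpha>))"
    using False by (simp add: ls_abs_def)
  then have "ls_abs \<alpha> < qq TYPE('a) powr (real_of_int e) \<longleftrightarrow> real_of_int (- fls_subdegree \<alpha>) < real_of_int e"
    using qq_gt1[where 'a='a] by simp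
  then have "ls_abs \<alpha> < qq TYPE('a) powr (real_of_int e) \<longleftrightarrow> - fls_subdegree \<alpha> < e"
    by (simp only: of_int_less_iff)
  also have "\<dots> \<longleftrightarrow> (\<forall>k \<le> -e. fls_nth \<alpha> k = 0)"
  proof
    assume "- fls_subdegree \<alpha> < e" then show "\<forall>k \<le> -e. fls_nth \<alpha> k = 0" by auto
  next
    assume H: "\<forall>k \<le> -e. fls_nth \<alpha> k = 0"
    show "- fls_subdegree \<alpha> < e"
    proof (rule ccontr)
      assume "\<not> - fls_subdegree \<alpha> < e"
      then have "fls_subdegree \<alpha> \<le> -e" by simp
      with H have "fls_nth \<alpha> (fls_subdegree \<alpha>) = 0" by auto
      with False show False by simp
    qed
  qed
  finally show ?thesis .
qed

lemma poly_abs_less_iff: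
  "poly_abs (b::'a::{finite,field} poly) < qq TYPE('a) ^ P \<longleftrightarrow> (\<forall>i\<ge>P. coeff b i = 0)"
proof -
  have "qq TYPE('a) ^ P = qq TYPE('a) powr (real_of_int (int P))"
    using qq_gt1[where 'a='a] by (simp add: powr_realpow)
  then have "poly_abs b < qq TYPE('a) ^ P \<longleftrightarrow> (\<forall>k \<le> - int P. fls_nth (poly_to_fls b) k = 0)"
    unfolding poly_abs_def by (simp only: ls_abs_less_iff)
  also have "\<dots> \<longleftrightarrow> (\<forall>i\<ge>P. coeff b i = 0)"
  proof safe
    fix i assume "\<forall>k \<le> - int P. fls_nth (poly_to_fls b) k = 0" "P \<le> i"
    then have "fls_nth (poly_to_fls b) (- int i) = 0" by auto
    then show "coeff b i = 0" by (simp add: poly_to_fls_nth)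
  next
    fix k assume "\<forall>i\<ge>P. coeff b i = 0" "k \<le> - int P"
    then show "fls_nth (poly_to_fls b) k = 0" by (simp add: poly_to_fls_nth)
  qed
  finally show ?thesis .
qed

lemma poly_abs_nonzero:
  assumes "(r::'a::{finite,field} poly) \<noteq> 0"
  shows "poly_abs r = qq TYPE('a) ^ degree r"
proof -
  have nz: "poly_to_fls r \<noteq> 0"
  proof
    assume "poly_to_fls r = 0"
    then have "fls_nth (poly_to_fls r) (- int (degree r)) = 0" by simp
    then show False using assms by (simp add: poly_to_fls_nth)
  qed
  have "fls_subdegree (poly_to_fls r) = - int (degree r)"
  proof (rule antisym)
    show "fls_subdegree (poly_to_fls r) \<le> - int (degree r)"
      by (rule fls_subdegree_leI) (use assms in \<open>simp add: poly_to_fls_nth\<close>)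
    show "- int (degree r) \<le> fls_subdegree (poly_to_fls r)"
      by (rule fls_subdegree_geI[OF nz]) (auto simp: poly_to_fls_nth coeff_eq_0)
  qed
  then show ?thesis using nz qq_gt1[where 'a='a]
    by (simp add: poly_abs_def ls_abs_def powr_realpow)
qed

lemma digits_nth: "fls_nth (digits_to_fls d) k = (if k \<ge> 1 then d (nat (k - 1)) else 0)"
  by (simp add: digits_to_fls_def fls_X_times_conv_shift)

lemma digits_abs_less_iff:
  "ls_abs (digits_to_fls (d::nat \<Rightarrow> 'a::{finite,field})) < 1 / (qq TYPE('a) ^ A * qq TYPE('a) ^ B)
   \<longleftrightarrow> (\<forall>i < A + B. d i = 0)"
proof -
  have "qq TYPE('a) ^ A * qq TYPE('a) ^ B = qq TYPE('a) powr (real (A + B))"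
    using qq_gt1[where 'a='a] by (simp add: powr_realpow[symmetric] powr_add)
  then have eq: "1 / (qq TYPE('a) ^ A * qq TYPE('a) ^ B) = qq TYPE('a) powr (real_of_int (- int (A + B)))"
    by (simp add: powr_minus_divide[symmetric])
  have "ls_abs (digits_to_fls d) < 1 / (qq TYPE('a) ^ A * qq TYPE('a) ^ B)
     \<longleftrightarrow> (\<forall>k \<le> int (A+B). fls_nth (digits_to_fls d) k = 0)"
    unfolding eq ls_abs_less_iff by (simp add: add.commute)
  also have "\<dots> \<longleftrightarrow> (\<forall>i < A + B. d i = 0)"
  proof safe
    fix i assume "\<forall>k \<le> int (A+B). fls_nth (digits_to_fls d) k = 0" "i < A + B"
    then have "fls_nth (digits_to_fls d) (int i + 1) = 0" by auto
    then show "d i = 0" by (simp add: digits_nth)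
  next
    fix k assume "\<forall>i < A + B. d i = 0" "k \<le> int (A+B)"
    then show "fls_nth (digits_to_fls d) k = 0" by (auto simp: digits_nth)
  qed
  finally show ?thesis .
qed



definition Psi :: "'a::{finite,field} \<Rightarrow> complex" where
  "Psi c = exp (2 * pi * \<i> * of_nat (ftrace_nat c) / of_nat CHAR('a))"

lemma psi_Psi: "psi \<alpha> = Psi (fls_nth \<alpha> 1)"
  by (simp add: psi_def Psi_def)

lemma Psi0: "Psi (0::'a::{finite,field}) = 1"
proof -
  have cp: "CHAR('a) > 0" by (rule finite_imp_CHAR_pos) simp
  have "ftrace (0::'a) = 0" using cp by (simp add: ftrace_def zero_power)
  then have "ftrace_nat (0::'a) = 0"
    unfolding ftrace_nat_def
  proof (intro the_equality)
    show "0 < CHAR('a) \<and> of_nat 0 = ftrace (0::'a)" using cp \<open>ftrace (0::'a) = 0\<close> by simp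
  next
    fix k assume "k < CHAR('a) \<and> of_nat k = ftrace (0::'a)"
    then have "k < CHAR('a)" "CHAR('a) dvd k" using \<open>ftrace (0::'a) = 0\<close> of_nat_eq_0_iff_char_dvd by auto
    then show "k = 0" using dvd_imp_le by (cases "k = 0") auto
  qed
  then show ?thesis by (simp add: Psi_def)
qed

lemma digits_mult_nth:
  fixes g :: "'a::{finite,field} poly"
  assumes "\<forall>i\<ge>N. coeff g i = 0"
  shows "fls_nth (digits_to_fls d * poly_to_fls g) 1 = (\<Sum>i<N. coeff g i * d i)"
proof -
  have "fls_nth (digits_to_fls d * poly_to_fls g) 1 =
        (\<Sum>j\<le>degree g. fls_nth (digits_to_fls d * (fls_const (coeff g j) * fls_X_inv ^ j)) 1)"
    by (simp add: poly_to_fls_def sum_distrib_left fls_nth_sum)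
  also have "\<dots> = (\<Sum>j\<le>degree g. coeff g j * d j)"
  proof (rule sum.cong)
    fix j
    have "digits_to_fls d * (fls_const (coeff g j) * fls_X_inv ^ j) =
          fls_shift (int j) (digits_to_fls d * fls_const (coeff g j))"
      by (metis mult.assoc fls_X_inv_power_times_conv_shift(2))
    then show "fls_nth (digits_to_fls d * (fls_const (coeff g j) * fls_X_inv ^ j)) 1 = coeff g j * d j"
      by (simp add: digits_nth mult.commute)
  qed simp
  also have "\<dots> = (\<Sum>i<N. coeff g i * d i)"
  proof (cases "g = 0")
    case True then show ?thesis by simp
  next
    case False
    then have "coeff g (degree g) \<noteq> 0" by simp
    then have "degree g < N" using assms by (meson not_le)
    then show ?thesis
      by (intro sum.mono_neutral_left) (auto simp: coeff_eq_0)
  qed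
  finally show ?thesis .
qed

lemma poly_to_fls_X_pow: "poly_to_fls ([:0,1:] ^ j :: 'a::{finite,field} poly) = fls_X_inv ^ j"
  by (rule fls_eqI) (auto simp: poly_to_fls_nth monom_altdef[of 1, simplified, symmetric] coeff_monom)

lemma div_X_pow_nth:
  fixes g :: "'a::{finite,field} poly"
  shows "fls_nth (poly_to_fls g / poly_to_fls ([:0,1:] ^ j)) 1 = (if j \<ge> 1 then coeff g (j - 1) else 0)"
proof -
  have "poly_to_fls g / poly_to_fls ([:0,1:] ^ j) = poly_to_fls g * fls_X ^ j"
    by (simp add: poly_to_fls_X_pow divide_inverse power_inverse[symmetric] fls_inverse_X_inv)
  then show ?thesis
    by (auto simp: fls_X_power_times_conv_shift poly_to_fls_nth nat_diff_distrib)
qed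

lemma dvd_X_pow_unit:
  fixes d :: "'a::field poly"
  shows "d dvd [:0,1:] ^ j \<Longrightarrow> poly d 0 \<noteq> 0 \<Longrightarrow> is_unit d"
proof (induction j arbitrary: d)
  case 0
  then show ?case by simp
next
  case (Suc j)
  from Suc.prems(1) obtain e where e: "[:0,1:] ^ Suc j = d * e" by (elim dvdE)
  then have "poly d 0 * poly e 0 = 0" by (metis poly_mult poly_power poly_pCons mult_zero_left power_Suc mult_zero_right add_0 poly_0)
  then have "poly e 0 = 0" using Suc.prems(2) by simp
  then have "[:0,1:] dvd e" using dvd_iff_poly_eq_0[of 0 e] by simp
  then obtain e' where e': "e = [:0,1:] * e'" by (elim dvdE)
  have "[:0,1:] * [:0,1:] ^ j = [:0,1:] * (d * e')" using e e' by (simp add: ac_simps)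
  then have "[:0,1:] ^ j = d * e'" by (metis mult_left_cancel pCons_eq_0_iff one_neq_zero)
  then have "d dvd [:0,1:] ^ j" by simp
  then show ?case using Suc.IH Suc.prems(2) by blast
qed

lemma coprime_X_pow_iff:
  fixes c :: "'a::{finite,field} poly"
  assumes "j \<ge> 1"
  shows "coprime c ([:0,1:] ^ j) \<longleftrightarrow> coeff c 0 \<noteq> 0"
proof -
  have pr: "prime_elem ([:0,1:] :: 'a poly)" by (rule prime_elem_linear_field_poly) simp
  have dv: "[:0,1:] dvd c \<longleftrightarrow> coeff c 0 = 0"
    using dvd_iff_poly_eq_0[of 0 c] by (simp add: poly_0_coeff_0)
  have "coprime c ([:0,1:] ^ j) \<longleftrightarrow> \<not> [:0,1:] dvd c"
  proof
    assume cp: "coprime c ([:0,1:] ^ j)"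
    show "\<not> [:0,1:] dvd c"
    proof
      assume "[:0,1:] dvd c"
      moreover have "[:0,1:] dvd ([:0,1:] ^ j :: 'a poly)" using assms by (simp add: dvd_power)
      ultimately have "is_unit ([:0,1:] :: 'a poly)" using cp coprime_common_divisor by blast
      then show False using pr prime_elem_not_unit by blast
    qed
  next
    assume "\<not> [:0,1:] dvd c"
    then have c0: "poly c 0 \<noteq> 0" using dv by (simp add: poly_0_coeff_0)
    show "coprime c ([:0,1:] ^ j)"
    proof (rule coprimeI)
      fix d assume "d dvd c" "d dvd [:0,1:] ^ j"
      from \<open>d dvd c\<close> obtain e where "c = d * e" by (elim dvdE)
      then have "poly d 0 \<noteq> 0" using c0 by auto
      then show "is_unit d" using dvd_X_pow_unit \<open>d dvd [:0,1:] ^ j\<close> by blast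
    qed
  qed
  then show ?thesis using dv by simp
qed

lemma haar_integral_finite:
  fixes H :: "(nat \<Rightarrow> 'a::{finite,field}) \<Rightarrow> complex"
  assumes H: "\<And>d. H d = H' (restrict d {..<N})"
  shows "integral\<^sup>L haarT H = (\<Sum>v\<in>PiE {..<N} (\<lambda>_. UNIV). H' v) / of_real (qq TYPE('a) ^ N)"
proof -
  define M where "M = (\<lambda>_::nat. uniform_count_measure (UNIV::'a set))"
  define V where "V = PiE {..<N} (\<lambda>_::nat. UNIV::'a set)"
  define E where "E v = prod_emb UNIV M {..<N} (PiE {..<N} (\<lambda>i. {v i}))" for v :: "nat \<Rightarrow> 'a"
  have hT: "haarT = PiM UNIV M" by (simp add: haarT_def M_def)
  interpret P: product_prob_space M UNIV
    by (rule product_prob_spaceI) (simp add: M_def prob_space_uniform_count_measure)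
  have spM: "space (M i) = UNIV" for i by (simp add: M_def space_uniform_count_measure)
  have Emem: "d \<in> E v \<longleftrightarrow> restrict d {..<N} = v" if "v \<in> V" for d v
    using that by (auto simp: E_def prod_emb_def spM V_def PiE_iff restrict_def fun_eq_iff extensional_def)
  have Esets: "E v \<in> sets haarT" for v
    unfolding hT E_def by (rule sets_PiM_I) (auto simp: M_def)
  have Emeas: "measure haarT (E v) = 1 / qq TYPE('a) ^ N" for v
  proof -
    have "measure haarT (E v) = (\<Prod>i<N. measure (M i) {v i})"
      unfolding hT E_def by (rule P.measure_PiM_emb) (auto simp: M_def)
    also have "\<dots> = (\<Prod>i<N. 1 / qq TYPE('a))"
      by (simp add: M_def measure_uniform_count_measure qq_def)
    finally show ?thesis by (simp add: power_one_over)
  qed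
  have Hsum: "H d = (\<Sum>v\<in>V. indicator (E v) d *\<^sub>R H' v)" for d
  proof -
    have "(\<Sum>v\<in>V. indicator (E v) d *\<^sub>R H' v) = (\<Sum>v\<in>V. if restrict d {..<N} = v then H' v else 0)"
      by (rule sum.cong) (auto simp: Emem indicator_def)
    also have "\<dots> = H' (restrict d {..<N})"
      by (subst sum.delta') (auto simp: V_def intro!: finite_PiE)
    finally show ?thesis using H by simp
  qed
  have fin: "emeasure haarT (E v) < \<top>" for v
  proof -
    have "finite_measure (PiM UNIV M)" by unfold_locales
    then have "emeasure (PiM UNIV M) (E v) \<noteq> \<top>" by (rule finite_measure.emeasure_finite)
    then show ?thesis unfolding hT less_top[symmetric] .
  qed
  have Heq: "H = (\<lambda>d. \<Sum>v\<in>V. indicator (E v) d *\<^sub>R H' v)"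
    by (rule ext) (rule Hsum)
  have "integral\<^sup>L haarT H = integral\<^sup>L haarT (\<lambda>d. \<Sum>v\<in>V. indicator (E v) d *\<^sub>R H' v)"
    by (subst Heq) (rule refl)
  also have "\<dots> = (\<Sum>v\<in>V. integral\<^sup>L haarT (\<lambda>d. indicator (E v) d *\<^sub>R H' v))"
    by (rule Bochner_Integration.integral_sum[where f="\<lambda>(v::nat\<Rightarrow>'a) (d::nat\<Rightarrow>'a). (indicator (E v) d :: real) *\<^sub>R H' v"])
       (auto intro!: integrable_scaleR_left integrable_real_indicator Esets fin)
  also have "\<dots> = (\<Sum>v\<in>V. (1 / qq TYPE('a) ^ N) *\<^sub>R H' v)"
  proof (rule sum.cong)
    fix v assume "v \<in> V"
    have "integral\<^sup>L haarT (\<lambda>d. indicator (E v) d *\<^sub>R H' v) = integral\<^sup>L haarT (indicator (E v) :: _ \<Rightarrow> real) *\<^sub>R H' v"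
      by (rule integral_scaleR_left, rule integrable_real_indicator[OF Esets]) (simp add: fin)
    also have "\<dots> = measure haarT (E v) *\<^sub>R H' v"
      using sets.sets_into_space[OF Esets[of v]] by (simp add: Int_absorb2)
    finally show "integral\<^sup>L haarT (\<lambda>d. indicator (E v) d *\<^sub>R H' v) = (1 / qq TYPE('a) ^ N) *\<^sub>R H' v"
      by (simp add: Emeas)
  qed simp
  also have "\<dots> = (\<Sum>v\<in>V. H' v) / of_real (qq TYPE('a) ^ N)"
    by (simp add: scaleR_conv_of_real sum_divide_distrib)
  finally show ?thesis by (simp add: V_def)
qed


definition Bk :: "nat \<Rightarrow> 'a::{finite,field} poly set" where
  "Bk k = {b. \<forall>i\<ge>k. coeff b i = 0}"

definition Xv :: "nat \<Rightarrow> nat \<Rightarrow> (nat \<Rightarrow> 'a::{finite,field} poly) set" where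
  "Xv n k = PiE {..<n} (\<lambda>_. Bk k)"

definition polyof :: "nat \<Rightarrow> (nat \<Rightarrow> 'a::{finite,field}) \<Rightarrow> 'a poly" where
  "polyof k v = (\<Sum>i<k. monom (v i) i)"

lemma coeff_polyof: "coeff (polyof k v) i = (if i < k then v i else 0)"
proof -
  have "coeff (polyof k v) i = (\<Sum>u<k. if i = u then v u else 0)"
    by (simp add: polyof_def coeff_sum coeff_monom)
  also have "\<dots> = (if i < k then v i else 0)" by (subst sum.delta') auto
  finally show ?thesis .
qed

lemma polyof_Bk: "polyof k v \<in> Bk k"
  by (simp add: Bk_def coeff_polyof)

lemma pvecs_Xv: "pvecs n (qq TYPE('a) ^ k) = (Xv n k :: (nat \<Rightarrow> 'a::{finite,field} poly) set)"
  by (simp add: pvecs_def Xv_def Bk_def poly_abs_less_iff)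

lemma Bk_degree: "k \<ge> 1 \<Longrightarrow> b \<in> Bk k \<longleftrightarrow> degree b < k"
proof
  assume "k \<ge> 1" "b \<in> Bk k"
  show "degree b < k"
  proof (rule ccontr)
    assume "\<not> degree b < k"
    then have "coeff b (degree b) = 0" using \<open>b \<in> Bk k\<close> by (simp add: Bk_def)
    then have "b = 0" by simp
    then show False using \<open>\<not> degree b < k\<close> \<open>k \<ge> 1\<close> by simp
  qed
next
  assume "degree b < k" then show "b \<in> Bk k" by (simp add: Bk_def coeff_eq_0)
qed

lemma card_Bk: "card (Bk k :: 'a::{finite,field} poly set) = CARD('a) ^ k"
proof -
  have "bij_betw (\<lambda>b. restrict (coeff b) {..<k}) (Bk k :: 'a poly set) (PiE {..<k} (\<lambda>_. UNIV))"
  proof (rule bij_betw_byWitness[where f'="polyof k"])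
    show "\<forall>b\<in>Bk k. polyof k (restrict (coeff b) {..<k}) = b"
      by (auto simp: Bk_def coeff_polyof intro!: poly_eqI)
    show "\<forall>v\<in>PiE {..<k} (\<lambda>_. UNIV). restrict (coeff (polyof k v)) {..<k} = v"
      by (auto simp: coeff_polyof PiE_iff restrict_def extensional_def fun_eq_iff)
    show "(\<lambda>b. restrict (coeff b) {..<k}) ` Bk k \<subseteq> PiE {..<k} (\<lambda>_. UNIV)"
      by (intro image_subsetI) (simp only: restrict_PiE_iff UNIV_I ball_simps(4), simp)
    show "polyof k ` PiE {..<k} (\<lambda>_. UNIV) \<subseteq> Bk k" using polyof_Bk by auto
  qed
  then have "card (Bk k :: 'a poly set) = card (PiE {..<k} (\<lambda>_. UNIV :: 'a set))"
    by (rule bij_betw_same_card)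
  also have "\<dots> = CARD('a) ^ k" by (simp add: card_PiE)
  finally show ?thesis .
qed

lemma finite_Bk: "finite (Bk k :: 'a::{finite,field} poly set)"
proof (rule ccontr)
  assume "infinite (Bk k :: 'a poly set)"
  then have "card (Bk k :: 'a poly set) = 0" by (rule card.infinite)
  moreover have "CARD('a) ^ k \<noteq> 0" by simp
  ultimately show False by (simp only: card_Bk)
qed

lemma card_Xv: "card (Xv n k :: (nat \<Rightarrow> 'a::{finite,field} poly) set) = CARD('a) ^ (n * k)"
proof -
  have "card (Xv n k :: (nat \<Rightarrow> 'a poly) set) = (\<Prod>i<n. card (Bk k :: 'a poly set))"
    unfolding Xv_def by (rule card_PiE) simp
  also have "\<dots> = (CARD('a) ^ k) ^ n" by (simp add: card_Bk)
  also have "\<dots> = CARD('a) ^ (n * k)" by (simp only: power_mult[symmetric] mult.commute)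
  finally show ?thesis .
qed

lemma finite_Xv: "finite (Xv n k :: (nat \<Rightarrow> 'a::{finite,field} poly) set)"
  unfolding Xv_def by (rule finite_PiE) (simp_all add: finite_Bk)

lemma coeff_fquad_zero:
  assumes "x \<in> Xv n P" "P \<ge> 1" "i \<ge> 2 * P - 1"
  shows "coeff (fquad a n x) i = 0"
proof -
  have "degree (fquad a n x) \<le> 2 * P - 2"
    unfolding fquad_def
  proof (rule degree_sum_le)
    fix l assume "l \<in> {..<n}"
    then have "degree (x l) < P" using assms(1,2) Bk_degree by (auto simp: Xv_def)
    then have "degree (x l ^ 2) \<le> 2 * P - 2"
      using degree_power_le[of "x l" 2] by linarith
    then show "degree (smult (a l) (x l ^ 2)) \<le> 2 * P - 2"
      using degree_smult_le le_trans by blast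
  qed simp
  then show ?thesis using assms(2,3) by (intro coeff_eq_0) linarith
qed


definition revp :: "nat \<Rightarrow> 'a::{finite,field} poly \<Rightarrow> 'a poly" where
  "revp k b = polyof k (\<lambda>i. coeff b (k - 1 - i))"

lemma coeff_revp: "coeff (revp k b) i = (if i < k then coeff b (k - 1 - i) else 0)"
  by (simp add: revp_def coeff_polyof)

lemma revp_Bk: "revp k b \<in> Bk k"
  by (simp add: revp_def polyof_Bk)

lemma revp_revp: "b \<in> Bk k \<Longrightarrow> revp k (revp k b) = b"
  by (rule poly_eqI) (auto simp: coeff_revp Bk_def)

lemma coeff_monom_reflect:
  fixes g :: "'a::field poly"
  shows "coeff (monom 1 e * reflect_poly g) s = (if e + degree g < s then 0 else coeff g (e + degree g - s))"
proof (cases "e \<le> s")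
  case True
  then show ?thesis by (auto simp: coeff_monom_mult coeff_reflect_poly add.commute[of "degree g" e])
next
  case False
  then have "coeff g (e + degree g - s) = 0" by (intro coeff_eq_0) simp
  then show ?thesis using False by (auto simp: coeff_monom_mult)
qed

lemma revp_reflect:
  assumes "b \<in> Bk k" "k \<ge> 1"
  shows "revp k b = monom 1 (k - 1 - degree b) * reflect_poly b"
proof (rule poly_eqI)
  fix s
  have d: "degree b < k" using assms Bk_degree by blast
  then have e: "k - 1 - degree b + degree b = k - 1" by simp
  show "coeff (revp k b) s = coeff (monom 1 (k - 1 - degree b) * reflect_poly b) s"
    unfolding coeff_monom_reflect e using d by (auto simp: coeff_revp)
qed

lemma coeff_revp_mult:
  assumes "p \<in> Bk k" "q \<in> Bk k" "k \<ge> 1"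
  shows "coeff (revp k p * revp k q) s = (if 2 * k - 2 < s then 0 else coeff (p * q) (2 * k - 2 - s))"
proof (cases "p = 0 \<or> q = 0")
  case True
  have r0: "revp k 0 = 0" by (rule poly_eqI) (simp add: coeff_revp)
  from True show ?thesis by (elim disjE) (simp_all add: r0)
next
  case False
  have dp: "degree p < k" and dq: "degree q < k" using assms Bk_degree by blast+
  have dpq: "degree (p * q) = degree p + degree q" using False by (simp add: degree_mult_eq)
  have "revp k p * revp k q =
        (monom 1 (k - 1 - degree p) * monom 1 (k - 1 - degree q)) * (reflect_poly p * reflect_poly q)"
    using assms by (simp add: revp_reflect ac_simps)
  also have "\<dots> = monom 1 (k - 1 - degree p + (k - 1 - degree q)) * reflect_poly (p * q)"
    by (simp add: mult_monom reflect_poly_mult)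
  finally have eq: "revp k p * revp k q = monom 1 (k - 1 - degree p + (k - 1 - degree q)) * reflect_poly (p * q)" .
  have e: "k - 1 - degree p + (k - 1 - degree q) + degree (p * q) = 2 * k - 2"
    using dp dq dpq by simp
  show ?thesis unfolding eq coeff_monom_reflect e ..
qed

definition revv :: "nat \<Rightarrow> nat \<Rightarrow> (nat \<Rightarrow> 'a::{finite,field} poly) \<Rightarrow> (nat \<Rightarrow> 'a poly)" where
  "revv n k x = restrict (\<lambda>l. revp k (x l)) {..<n}"

lemma revv_Xv: "revv n k x \<in> Xv n k"
  by (simp add: revv_def Xv_def revp_Bk)

lemma revv_revv: "x \<in> Xv n k \<Longrightarrow> revv n k (revv n k x) = x"
  by (auto simp: revv_def Xv_def revp_revp PiE_iff extensional_def fun_eq_iff)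

lemma revv_bij: "bij_betw (revv n k) (Xv n k :: (nat \<Rightarrow> 'a::{finite,field} poly) set) (Xv n k)"
  by (rule bij_betw_byWitness[where f'="revv n k"]) (auto simp: revv_revv revv_Xv)

lemma coeff_fquad_revv:
  assumes "x \<in> Xv n k" "k \<ge> 1"
  shows "coeff (fquad a n (revv n k x)) s =
         (if 2 * k - 2 < s then 0 else coeff (fquad a n x) (2 * k - 2 - s))"
proof -
  have xl: "x l \<in> Bk k" if "l < n" for l using assms(1) that by (auto simp: Xv_def)
  have "coeff (fquad a n (revv n k x)) s = (\<Sum>l<n. a l * coeff (revp k (x l) * revp k (x l)) s)"
    by (simp add: fquad_def coeff_sum revv_def power2_eq_square)
  also have "\<dots> = (\<Sum>l<n. if 2 * k - 2 < s then 0 else a l * coeff (x l * x l) (2 * k - 2 - s))"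
  proof (rule sum.cong)
    fix l assume "l \<in> {..<n}"
    then show "a l * coeff (revp k (x l) * revp k (x l)) s =
      (if 2 * k - 2 < s then 0 else a l * coeff (x l * x l) (2 * k - 2 - s))"
      using coeff_revp_mult[OF xl xl assms(2), of l l s] by simp
  qed simp
  also have "\<dots> = (if 2 * k - 2 < s then 0 else coeff (fquad a n x) (2 * k - 2 - s))"
    by (simp add: fquad_def coeff_sum power2_eq_square)
  finally show ?thesis .
qed

definition comb :: "nat \<Rightarrow> nat \<Rightarrow> (nat \<Rightarrow> 'a::{finite,field} poly) \<Rightarrow> (nat \<Rightarrow> 'a poly) \<Rightarrow> (nat \<Rightarrow> 'a poly)" where
  "comb n j y z = restrict (\<lambda>l. y l + monom 1 j * z l) {..<n}"

lemma comb_bij: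
  assumes "j \<le> P"
  shows "bij_betw (\<lambda>(y, z). comb n j y z) (Xv n j \<times> Xv n (P - j)) (Xv n P :: (nat \<Rightarrow> 'a::{finite,field} poly) set)"
proof -
  have c1: "poly_cutoff j (y + monom 1 j * z) = y" if "y \<in> Bk j" for y z :: "'a poly"
  proof (intro poly_eqI)
    fix k show "coeff (poly_cutoff j (y + monom 1 j * z)) k = coeff y k"
      using that unfolding Bk_def by (cases "k < j") (simp_all add: coeff_poly_cutoff coeff_monom_mult)
  qed
  have c2: "poly_shift j (y + monom 1 j * z) = z" if "y \<in> Bk j" for y z :: "'a poly"
  proof (intro poly_eqI)
    fix k show "coeff (poly_shift j (y + monom 1 j * z)) k = coeff z k"
      using that unfolding Bk_def by (simp add: coeff_poly_shift coeff_monom_mult)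
  qed
  have c3: "poly_cutoff j x + monom 1 j * poly_shift j x = x" for x :: "'a poly"
  proof (intro poly_eqI)
    fix k show "coeff (poly_cutoff j x + monom 1 j * poly_shift j x) k = coeff x k"
      by (cases "k < j") (simp_all add: coeff_poly_shift coeff_poly_cutoff coeff_monom_mult)
  qed
  have c4: "y + monom 1 j * z \<in> Bk P" if "y \<in> Bk j" "z \<in> Bk (P - j)" for y z :: "'a poly"
    using that assms by (auto simp: Bk_def coeff_monom_mult)
  have c5: "poly_cutoff j x \<in> Bk j" for x :: "'a poly"
    by (auto simp: Bk_def coeff_poly_cutoff)
  have c6: "poly_shift j x \<in> Bk (P - j)" if "x \<in> Bk P" for x :: "'a poly"
    using that assms by (auto simp: Bk_def coeff_poly_shift)
  have xy: "y l \<in> Bk k" if "y \<in> Xv n k" "l < n" for y :: "nat \<Rightarrow> 'a poly" and k l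
    using that by (auto simp: Xv_def)
  have xu: "y l = undefined" if "y \<in> Xv n k" "\<not> l < n" for y :: "nat \<Rightarrow> 'a poly" and k l
    using that unfolding Xv_def by (metis PiE_arb lessThan_iff)
  have inv1: "restrict (\<lambda>l. poly_cutoff j (comb n j y z l)) {..<n} = y \<and>
               restrict (\<lambda>l. poly_shift j (comb n j y z l)) {..<n} = z"
    if y: "y \<in> Xv n j" and z: "z \<in> Xv n (P - j)" for y z :: "nat \<Rightarrow> 'a poly"
  proof
    show "restrict (\<lambda>l. poly_cutoff j (comb n j y z l)) {..<n} = y"
    proof (rule ext)
      fix l show "restrict (\<lambda>l. poly_cutoff j (comb n j y z l)) {..<n} l = y l"
        by (cases "l < n") (simp_all add: comb_def c1 xy[OF y] xu[OF y])
    qed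
    show "restrict (\<lambda>l. poly_shift j (comb n j y z l)) {..<n} = z"
    proof (rule ext)
      fix l show "restrict (\<lambda>l. poly_shift j (comb n j y z l)) {..<n} l = z l"
        by (cases "l < n") (simp_all add: comb_def c2 xy[OF y] xu[OF z])
    qed
  qed
  have inv2: "comb n j (restrict (\<lambda>l. poly_cutoff j (x l)) {..<n}) (restrict (\<lambda>l. poly_shift j (x l)) {..<n}) = x"
    if x: "x \<in> Xv n P" for x :: "nat \<Rightarrow> 'a poly"
    proof (rule ext)
      fix l show "comb n j (restrict (\<lambda>l. poly_cutoff j (x l)) {..<n}) (restrict (\<lambda>l. poly_shift j (x l)) {..<n}) l = x l"
        by (cases "l < n") (simp_all add: comb_def c3 xu[OF x])
    qed
  have im1: "comb n j y z \<in> Xv n P"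
    if y: "y \<in> Xv n j" and z: "z \<in> Xv n (P - j)" for y z :: "nat \<Rightarrow> 'a poly"
      unfolding comb_def Xv_def by (rule restrict_PiE_iff[THEN iffD2]) (simp add: c4 xy[OF y] xy[OF z])
  have im2: "restrict (\<lambda>l. poly_cutoff j (x l)) {..<n} \<in> Xv n j"
    for x :: "nat \<Rightarrow> 'a poly"
      unfolding Xv_def by (rule restrict_PiE_iff[THEN iffD2]) (simp add: c5)
  have im3: "restrict (\<lambda>l. poly_shift j (x l)) {..<n} \<in> Xv n (P - j)"
    if x: "x \<in> Xv n P" for x :: "nat \<Rightarrow> 'a poly"
      unfolding Xv_def by (rule restrict_PiE_iff[THEN iffD2]) (simp add: c6 xy[OF x])
  show ?thesis
    by (rule bij_betw_byWitness[where f'="\<lambda>x. (restrict (\<lambda>l. poly_cutoff j (x l)) {..<n}, restrict (\<lambda>l. poly_shift j (x l)) {..<n})"])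
       (use inv1 inv2 im1 im2 im3 in auto)
qed
lemma sum_split:
  fixes h :: "(nat \<Rightarrow> 'a::{finite,field} poly) \<Rightarrow> complex"
  assumes "j \<le> P" and inv: "\<And>y z. y \<in> Xv n j \<Longrightarrow> z \<in> Xv n (P - j) \<Longrightarrow> h (comb n j y z) = h y"
  shows "(\<Sum>x\<in>Xv n P. h x) = of_nat (card (Xv n (P - j) :: (nat \<Rightarrow> 'a poly) set)) * (\<Sum>y\<in>Xv n j. h y)"
proof -
  have "(\<Sum>x\<in>Xv n P. h x) = (\<Sum>yz\<in>Xv n j \<times> Xv n (P - j). h ((\<lambda>(y, z). comb n j y z) yz))"
    by (rule sum.reindex_bij_betw[symmetric]) (rule comb_bij[OF assms(1)])
  also have "\<dots> = (\<Sum>y\<in>Xv n j. \<Sum>z\<in>Xv n (P - j). h (comb n j y z))"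
    unfolding sum.cartesian_product by (intro sum.cong) auto
  also have "\<dots> = (\<Sum>y\<in>Xv n j. \<Sum>z\<in>(Xv n (P - j) :: (nat \<Rightarrow> 'a poly) set). h y)"
    by (intro sum.cong refl) (simp add: inv)
  also have "\<dots> = of_nat (card (Xv n (P - j) :: (nat \<Rightarrow> 'a poly) set)) * (\<Sum>y\<in>Xv n j. h y)"
    by (simp add: sum_distrib_left)
  finally show ?thesis .
qed

lemma fquad_comb_coeff:
  assumes "i < j"
  shows "coeff (fquad a n (comb n j y z)) i = coeff (fquad a n y) i"
proof -
  have sq: "(p + monom 1 j * w) ^ 2 = p ^ 2 + monom 1 j * (w * (2 * p + monom 1 j * w))" for p w :: "'a poly"
    by (simp add: algebra_simps power2_eq_square)
  have "coeff (fquad a n (comb n j y z)) i = (\<Sum>l<n. a l * coeff ((y l + monom 1 j * z l) ^ 2) i)"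
    by (simp add: fquad_def coeff_sum comb_def)
  also have "\<dots> = (\<Sum>l<n. a l * coeff (y l ^ 2) i)"
    using assms by (simp add: sq coeff_monom_mult)
  also have "\<dots> = coeff (fquad a n y) i"
    by (simp add: fquad_def coeff_sum)
  finally show ?thesis .
qed

lemma coeff_mult_comb:
  assumes "j \<ge> 1"
  shows "coeff (c * fquad a n (comb n j y z)) (j - 1) = coeff (c * fquad a n y) (j - 1)"
  unfolding coeff_mult
  by (rule sum.cong) (use assms in \<open>auto simp: fquad_comb_coeff\<close>)

lemma degree_X_pow: "degree ([:0,1:] ^ j :: 'a::field poly) = j"
  by (simp add: degree_power_eq)

lemma poly_abs_X_pow: "poly_abs ([:0,1:] ^ j :: 'a::{finite,field} poly) = qq TYPE('a) ^ j"
  using poly_abs_nonzero[of "[:0,1:] ^ j :: 'a poly"] by (simp add: degree_X_pow)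

lemma Sar_X_pow:
  assumes "j \<ge> 1"
  shows "Sar a n c ([:0,1:] ^ j) = (\<Sum>y\<in>Xv n j. Psi (coeff (c * fquad a n y) (j - 1)))"
  unfolding Sar_def poly_abs_X_pow pvecs_Xv psi_Psi div_X_pow_nth using assms by simp

definition Cj :: "nat \<Rightarrow> 'a::{finite,field} poly set" where
  "Cj j = {c. c \<in> Bk j \<and> coeff c 0 \<noteq> 0}"

lemma Sr_X_pow:
  assumes "j \<ge> 1"
  shows "Sr a n ([:0,1:] ^ j) = (\<Sum>c\<in>Cj j. Sar a n c ([:0,1:] ^ j))"
proof -
  have "{c :: 'a poly. poly_abs c < poly_abs ([:0,1:] ^ j :: 'a poly) \<and> coprime c ([:0,1:] ^ j)} = Cj j"
    unfolding poly_abs_X_pow by (auto simp: Cj_def Bk_def poly_abs_less_iff coprime_X_pow_iff[OF assms])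
  then show ?thesis by (simp add: Sr_def)
qed

lemma Sr_one: "Sr a n (1 :: 'a::{finite,field} poly) = 1"
proof -
  have p1: "poly_abs (1 :: 'a poly) = qq TYPE('a) ^ 0"
    using poly_abs_nonzero[of "1 :: 'a poly"] by simp
  have z: "poly_abs c < 1 \<longleftrightarrow> c = 0" for c :: "'a poly"
    using poly_abs_less_iff[of c 0] by (auto intro: poly_eqI)
  have "{c :: 'a poly. poly_abs c < poly_abs (1 :: 'a poly) \<and> coprime c 1} = {0}"
    unfolding p1 by (auto simp: z)
  then have "Sr a n (1 :: 'a poly) = Sar a n 0 1" by (simp add: Sr_def)
  also have "\<dots> = (\<Sum>b\<in>(Xv n 0 :: (nat \<Rightarrow> 'a poly) set). (1::complex))"
    unfolding Sar_def p1 pvecs_Xv by (simp add: psi_Psi Psi0 poly_to_fls_def)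
  also have "\<dots> = 1" by (simp add: card_Xv)
  finally show ?thesis .
qed

lemma main_j:
  fixes c :: "'a::{finite,field} poly"
  assumes j: "1 \<le> j" "j \<le> P" and c: "c \<in> Bk j"
  shows "(\<Sum>x\<in>Xv n P. Psi (\<Sum>w<j. coeff (fquad a n x) (2 * P - 1 - j + w) * coeff c w)) =
         of_nat (CARD('a) ^ (n * (P - j))) * (\<Sum>y\<in>Xv n j. Psi (coeff (c * fquad a n y) (j - 1)))"
proof -
  have P1: "P \<ge> 1" using j by simp
  have cm: "coeff (c * g) (j - 1) = (\<Sum>w<j. coeff g (j - 1 - w) * coeff c w)" for g :: "'a poly"
  proof -
    have "{..j - 1} = {..<j}" using j by auto
    then show ?thesis by (simp add: coeff_mult mult.commute)
  qed
  have "(\<Sum>x\<in>Xv n P. Psi (\<Sum>w<j. coeff (fquad a n x) (2 * P - 1 - j + w) * coeff c w)) =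
        (\<Sum>x\<in>Xv n P. Psi (\<Sum>w<j. coeff (fquad a n (revv n P x)) (2 * P - 1 - j + w) * coeff c w))"
    by (rule sum.reindex_bij_betw[symmetric, where h="revv n P"]) (rule revv_bij)
  also have "\<dots> = (\<Sum>x\<in>Xv n P. Psi (coeff (c * fquad a n x) (j - 1)))"
  proof (rule sum.cong[OF refl])
    fix x :: "nat \<Rightarrow> 'a poly" assume x: "x \<in> Xv n P"
    have "(\<Sum>w<j. coeff (fquad a n (revv n P x)) (2 * P - 1 - j + w) * coeff c w) =
          (\<Sum>w<j. coeff (fquad a n x) (j - 1 - w) * coeff c w)"
    proof (rule sum.cong[OF refl])
      fix w assume "w \<in> {..<j}"
      then have "\<not> 2 * P - 2 < 2 * P - 1 - j + w" "2 * P - 2 - (2 * P - 1 - j + w) = j - 1 - w"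
        using j by auto
      then show "coeff (fquad a n (revv n P x)) (2 * P - 1 - j + w) * coeff c w =
                 coeff (fquad a n x) (j - 1 - w) * coeff c w"
        using coeff_fquad_revv[OF x P1, of a "2 * P - 1 - j + w"] by simp
    qed
    then show "Psi (\<Sum>w<j. coeff (fquad a n (revv n P x)) (2 * P - 1 - j + w) * coeff c w) =
               Psi (coeff (c * fquad a n x) (j - 1))"
      by (simp only: cm)
  qed
  also have "\<dots> = of_nat (card (Xv n (P - j) :: (nat \<Rightarrow> 'a poly) set)) *
                   (\<Sum>y\<in>Xv n j. Psi (coeff (c * fquad a n y) (j - 1)))"
    by (rule sum_split[OF j(2)]) (rule arg_cong[where f=Psi], rule coeff_mult_comb[OF j(1)])
  also have "\<dots> = of_nat (CARD('a) ^ (n * (P - j))) * (\<Sum>y\<in>Xv n j. Psi (coeff (c * fquad a n y) (j - 1)))"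
    by (simp add: card_Xv)
  finally show ?thesis .
qed

definition embv :: "nat \<Rightarrow> nat \<Rightarrow> 'a::{finite,field} poly \<Rightarrow> (nat \<Rightarrow> 'a)" where
  "embv N j c = restrict (\<lambda>i. if N - j \<le> i then coeff c (i - (N - j)) else 0) {..<N}"

definition Wj :: "nat \<Rightarrow> nat \<Rightarrow> (nat \<Rightarrow> 'a::{finite,field}) set" where
  "Wj N j = {v \<in> PiE {..<N} (\<lambda>_. UNIV). (\<forall>i<N - j. v i = 0) \<and> v (N - j) \<noteq> 0}"

lemma embv_bij:
  assumes "1 \<le> j" "j \<le> N"
  shows "bij_betw (embv N j) (Cj j) (Wj N j :: (nat \<Rightarrow> 'a::{finite,field}) set)"
proof -
  have i1: "polyof j (\<lambda>w. embv N j c (N - j + w)) = c" if "c \<in> Cj j" for c :: "'a poly"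
  proof (rule poly_eqI)
    fix w
    have cz: "coeff c w = 0" if "\<not> w < j" using \<open>c \<in> Cj j\<close> that by (simp add: Cj_def Bk_def)
    show "coeff (polyof j (\<lambda>w. embv N j c (N - j + w))) w = coeff c w"
    proof (cases "w < j")
      case True
      then have "N - j + w < N" "N - j + w - (N - j) = w" using assms by auto
      then show ?thesis using True by (simp add: coeff_polyof embv_def)
    next
      case False
      then show ?thesis using cz by (simp add: coeff_polyof)
    qed
  qed
  have i2: "embv N j (polyof j (\<lambda>w. v (N - j + w))) = v" if v: "v \<in> Wj N j" for v :: "nat \<Rightarrow> 'a"
  proof (rule ext)
    fix i
    have vz: "v i = 0" if "i < N - j" using v that by (simp add: Wj_def)
    have vu: "v i = undefined" if "\<not> i < N" using v that unfolding Wj_def by (metis (no_types, lifting) PiE_arb lessThan_iff mem_Collect_eq)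
    show "embv N j (polyof j (\<lambda>w. v (N - j + w))) i = v i"
    proof (cases "i < N")
      case True
      show ?thesis
      proof (cases "N - j \<le> i")
        case True
        then have "i - (N - j) < j" "N - j + (i - (N - j)) = i" using \<open>i < N\<close> assms by auto
        then show ?thesis using True \<open>i < N\<close> by (simp add: embv_def coeff_polyof)
      next
        case False
        then show ?thesis using \<open>i < N\<close> vz by (simp add: embv_def)
      qed
    next
      case False
      then show ?thesis using vu by (simp add: embv_def)
    qed
  qed
  have m1: "embv N j c \<in> Wj N j" if "c \<in> Cj j" for c :: "'a poly"
  proof -
    have "N - j < N" using assms by simp
    then have "embv N j c (N - j) = coeff c 0" by (simp add: embv_def)
    then have "embv N j c (N - j) \<noteq> 0" using that by (simp add: Cj_def)
    moreover have "\<forall>i<N - j. embv N j c i = 0" by (auto simp: embv_def)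
    moreover have "embv N j c \<in> PiE {..<N} (\<lambda>_. UNIV)" unfolding embv_def by (rule restrict_PiE_iff[THEN iffD2]) simp
    ultimately show ?thesis by (simp add: Wj_def)
  qed
  have m2: "polyof j (\<lambda>w. v (N - j + w)) \<in> Cj j" if "v \<in> Wj N j" for v :: "nat \<Rightarrow> 'a"
  proof -
    have "coeff (polyof j (\<lambda>w. v (N - j + w))) 0 = v (N - j)" using assms by (simp add: coeff_polyof)
    then show ?thesis using that by (simp add: Cj_def polyof_Bk Wj_def)
  qed
  show ?thesis
    by (rule bij_betw_byWitness[where f'="\<lambda>v. polyof j (\<lambda>w. v (N - j + w))"]) (use i1 i2 m1 m2 in auto)
qed
lemma embv_inner:
  assumes "c \<in> Bk j" "j \<le> N"
  shows "(\<Sum>i<N. coeff g i * embv N j c i) = (\<Sum>w<j. coeff g (N - j + w) * coeff c w)"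
proof -
  have "(\<Sum>i<N. coeff g i * embv N j c i) = (\<Sum>i\<in>{N - j..<N}. coeff g i * embv N j c i)"
    by (rule sum.mono_neutral_right) (auto simp: embv_def)
  also have "\<dots> = (\<Sum>w\<in>{0..<j}. coeff g (w + (N - j)) * embv N j c (w + (N - j)))"
    using sum.shift_bounds_nat_ivl[of "\<lambda>i. coeff g i * embv N j c i" 0 "N - j" j] assms(2) by simp
  also have "\<dots> = (\<Sum>w<j. coeff g (N - j + w) * coeff c w)"
    using assms(2) by (intro sum.cong) (auto simp: embv_def add.commute)
  finally show ?thesis .
qed

lemma V0_decomp:
  fixes G :: "(nat \<Rightarrow> 'a::{finite,field}) \<Rightarrow> complex"
  assumes "m \<le> N"
  shows "(\<Sum>v\<in>{v\<in>PiE {..<N} (\<lambda>_. UNIV). \<forall>i<m. v i = 0}. G v) =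
         G (restrict (\<lambda>_. 0) {..<N}) + (\<Sum>j\<in>{1..N - m}. \<Sum>v\<in>Wj N j. G v)"
proof -
  define z :: "nat \<Rightarrow> 'a" where "z = restrict (\<lambda>_. 0) {..<N}"
  define V0 where "V0 = {v\<in>PiE {..<N} (\<lambda>_. UNIV :: 'a set). \<forall>i<m. v i = 0}"
  have finW: "finite (Wj N j :: (nat \<Rightarrow> 'a) set)" for j
  proof (rule finite_subset)
    show "Wj N j \<subseteq> PiE {..<N} (\<lambda>_. UNIV :: 'a set)" unfolding Wj_def by (rule subsetI) simp
    show "finite (PiE {..<N} (\<lambda>_. UNIV :: 'a set))" by (rule finite_PiE) simp_all
  qed
  have sub1: "v \<in> insert z (\<Union>j\<in>{1..N - m}. Wj N j)" if v: "v \<in> V0" for v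
  proof (cases "\<exists>i<N. v i \<noteq> 0")
    case False
    have vP: "v \<in> PiE {..<N} (\<lambda>_. UNIV :: 'a set)" using v by (simp add: V0_def)
    have "v = z"
    proof (rule ext)
      fix i show "v i = z i"
      proof (cases "i < N")
        case True then show ?thesis using False by (simp add: z_def)
      next
        case False
        then have "v i = undefined" using vP by (intro PiE_arb[of v "{..<N}"]) simp_all
        then show ?thesis using False by (simp add: z_def)
      qed
    qed
    then show ?thesis by simp
  next
    case True
    define i0 where "i0 = (LEAST i. i < N \<and> v i \<noteq> 0)"
    have i0: "i0 < N \<and> v i0 \<noteq> 0" unfolding i0_def using True by (rule LeastI_ex)
    have below: "v i = 0" if "i < i0" for i
    proof (rule ccontr)
      assume "v i \<noteq> 0"
      then have "i < N \<and> v i \<noteq> 0" using that i0 by simp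
      then have "i0 \<le> i" unfolding i0_def by (rule Least_le)
      then show False using that by simp
    qed
    have "m \<le> i0"
    proof (rule ccontr)
      assume "\<not> m \<le> i0"
      then have "v i0 = 0" using v by (simp add: V0_def)
      then show False using i0 by simp
    qed
    then have jm: "N - i0 \<in> {1..N - m}" and ji: "N - (N - i0) = i0" using i0 by auto
    have "v \<in> Wj N (N - i0)"
      unfolding Wj_def ji using v below i0 by (simp add: V0_def)
    then show ?thesis using jm by blast
  qed
  have sub2: "v \<in> V0" if v: "v \<in> insert z (\<Union>j\<in>{1..N - m}. Wj N j)" for v
  proof (cases "v = z")
    case True
    have "z \<in> PiE {..<N} (\<lambda>_. UNIV :: 'a set)" unfolding z_def by (rule restrict_PiE_iff[THEN iffD2]) simp
    then show ?thesis using True assms by (auto simp: V0_def z_def)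
  next
    case False
    then obtain j where j: "j \<in> {1..N - m}" "v \<in> Wj N j" using v by blast
    then have "m \<le> N - j" by auto
    then show ?thesis using j(2) by (simp add: V0_def Wj_def)
  qed
  have eq: "V0 = insert z (\<Union>j\<in>{1..N - m}. Wj N j)"
    using sub1 sub2 by blast
  have zW: "z \<notin> (\<Union>j\<in>{1..N - m}. Wj N j)"
  proof
    assume "z \<in> (\<Union>j\<in>{1..N - m}. Wj N j)"
    then obtain j where j: "j \<in> {1..N - m}" "z \<in> Wj N j" by blast
    then have "N - j < N" by auto
    then have "z (N - j) = 0" by (simp add: z_def)
    then show False using j(2) by (simp add: Wj_def)
  qed
  have disj: "Wj N j \<inter> (Wj N j' :: (nat \<Rightarrow> 'a) set) = {}" if j: "j \<in> {1..N - m}" and j': "j' \<in> {1..N - m}" and "j < j'" for j j'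
  proof -
    have lt: "N - j' < N - j" using j j' \<open>j < j'\<close> by auto
    show ?thesis
    proof (rule equals0I)
      fix v assume "v \<in> Wj N j \<inter> Wj N j'"
      then have "\<forall>i<N - j. v i = 0" "v (N - j') \<noteq> 0" by (simp_all add: Wj_def)
      then show False using lt by blast
    qed
  qed
  have disj': "\<forall>j\<in>{1..N - m}. \<forall>j'\<in>{1..N - m}. j \<noteq> j' \<longrightarrow> Wj N j \<inter> (Wj N j' :: (nat \<Rightarrow> 'a) set) = {}"
  proof (intro ballI impI)
    fix j j' assume j: "j \<in> {1..N - m}" and j': "j' \<in> {1..N - m}" and "j \<noteq> j'"
    show "Wj N j \<inter> (Wj N j' :: (nat \<Rightarrow> 'a) set) = {}"
    proof (cases "j < j'")
      case True then show ?thesis using disj[OF j j'] by simp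
    next
      case False then have "j' < j" using \<open>j \<noteq> j'\<close> by simp
      then show ?thesis using disj[OF j' j] by blast
    qed
  qed
  have "(\<Sum>v\<in>V0. G v) = G z + (\<Sum>v\<in>(\<Union>j\<in>{1..N - m}. Wj N j). G v)"
    unfolding eq by (rule sum.insert[OF _ zW]) (simp add: finW)
  also have "(\<Sum>v\<in>(\<Union>j\<in>{1..N - m}. Wj N j). G v) = (\<Sum>j\<in>{1..N - m}. \<Sum>v\<in>Wj N j. G v)"
    by (rule sum.UNION_disjoint) (simp_all add: finW disj')
  finally show ?thesis unfolding V0_def z_def .
qed

lemma Ir_formula:
  fixes a :: "nat \<Rightarrow> 'a::{finite,field}" and r :: "'a poly"
  assumes r: "r \<noteq> 0" and P: "P \<ge> 1" and N1: "P + degree r \<le> N" and N2: "2 * P - 1 \<le> N"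
  shows "Ir a n P r =
    (\<Sum>v\<in>PiE {..<N} (\<lambda>_. UNIV).
        (if \<forall>i<P + degree r. v i = 0
         then \<Sum>x\<in>Xv n P. Psi (\<Sum>i<N. coeff (fquad a n x) i * v i) else 0)) / of_real (qq TYPE('a) ^ N)"
proof -
  define H' where "H' = (\<lambda>v::nat \<Rightarrow> 'a. (if \<forall>i<P + degree r. v i = 0
         then \<Sum>x\<in>Xv n P. Psi (\<Sum>i<N. coeff (fquad a n x) i * v i) else 0))"
  have pr: "poly_abs r = qq TYPE('a) ^ degree r" by (rule poly_abs_nonzero[OF r])
  have H: "indicator {d. ls_abs (digits_to_fls d) < 1 / (poly_abs r * qq TYPE('a) ^ P)} d *\<^sub>R
              Ssum a n P (digits_to_fls d) = H' (restrict d {..<N})" for d :: "nat \<Rightarrow> 'a"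
  proof -
    have ind: "d \<in> {d. ls_abs (digits_to_fls d) < 1 / (poly_abs r * qq TYPE('a) ^ P)} \<longleftrightarrow>
               (\<forall>i<P + degree r. d i = 0)"
      unfolding pr using digits_abs_less_iff[of d "degree r" P] by (simp add: add.commute)
    have ind2: "(\<forall>i<P + degree r. d i = 0) \<longleftrightarrow> (\<forall>i<P + degree r. restrict d {..<N} i = 0)"
      using N1 by auto
    have S: "Ssum a n P (digits_to_fls d) = (\<Sum>x\<in>Xv n P. Psi (\<Sum>i<N. coeff (fquad a n x) i * restrict d {..<N} i))"
      unfolding Ssum_def pvecs_Xv
    proof (rule sum.cong[OF refl])
      fix x :: "nat \<Rightarrow> 'a poly" assume x: "x \<in> Xv n P"
      have cz: "\<forall>i\<ge>N. coeff (fquad a n x) i = 0" using coeff_fquad_zero[OF x P] N2 by auto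
      have "(\<Sum>i<N. coeff (fquad a n x) i * d i) = (\<Sum>i<N. coeff (fquad a n x) i * restrict d {..<N} i)"
        by (rule sum.cong) auto
      then show "psi (digits_to_fls d * poly_to_fls (fquad a n x)) =
                 Psi (\<Sum>i<N. coeff (fquad a n x) i * restrict d {..<N} i)"
        by (simp add: psi_Psi digits_mult_nth[OF cz])
    qed
    show ?thesis
      unfolding H'_def S using ind ind2 by (simp add: indicator_def)
  qed
  have "Ir a n P r = integral\<^sup>L haarT (\<lambda>d. indicator {d. ls_abs (digits_to_fls d) < 1 / (poly_abs r * qq TYPE('a) ^ P)} d *\<^sub>R
              Ssum a n P (digits_to_fls d))"
    by (simp add: Ir_def set_lebesgue_integral_def)
  also have "\<dots> = (\<Sum>v\<in>PiE {..<N} (\<lambda>_. UNIV). H' v) / of_real (qq TYPE('a) ^ N)"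
    by (rule haar_integral_finite) (rule H)
  finally show ?thesis by (simp add: H'_def)
qed

lemma main_sum:
  fixes a :: "nat \<Rightarrow> 'a::{finite,field}"
  assumes P: "P \<ge> 1" and rho: "\<rho> < P"
  shows "(\<Sum>v\<in>PiE {..<2 * P - 1} (\<lambda>_. UNIV).
           (if \<forall>i<P + \<rho>. v i = 0
            then \<Sum>x\<in>Xv n P. Psi (\<Sum>i<2 * P - 1. coeff (fquad a n x) i * v i) else 0)) =
         (\<Sum>j=0..P - \<rho> - 1. of_nat (CARD('a) ^ (n * (P - j))) * Sr a n ([:0,1:] ^ j))"
proof -
  define N where "N = 2 * P - 1"
  define m where "m = P + \<rho>"
  define G where "G = (\<lambda>v::nat \<Rightarrow> 'a. \<Sum>x\<in>Xv n P. Psi (\<Sum>i<N. coeff (fquad a n x) i * v i))"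
  have mN: "m \<le> N" using rho P by (simp add: m_def N_def)
  have NmL: "N - m = P - \<rho> - 1" by (simp add: m_def N_def)
  have finV: "finite (PiE {..<N} (\<lambda>_. UNIV :: 'a set))" by (rule finite_PiE) simp_all
  have "(\<Sum>v\<in>PiE {..<N} (\<lambda>_. UNIV). (if \<forall>i<m. v i = 0 then G v else 0)) =
        (\<Sum>v\<in>{v\<in>PiE {..<N} (\<lambda>_. UNIV). \<forall>i<m. v i = 0}. G v)"
    by (rule sum.inter_filter[symmetric]) (rule finV)
  also have "\<dots> = G (restrict (\<lambda>_. 0) {..<N}) + (\<Sum>j\<in>{1..N - m}. \<Sum>v\<in>Wj N j. G v)"
    by (rule V0_decomp[OF mN])
  also have "G (restrict (\<lambda>_. 0) {..<N}) = of_nat (CARD('a) ^ (n * (P - 0))) * Sr a n ([:0,1:] ^ 0)"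
  proof -
    have "G (restrict (\<lambda>_. 0) {..<N}) = (\<Sum>x\<in>(Xv n P :: (nat \<Rightarrow> 'a poly) set). Psi (0::'a))"
      unfolding G_def by (intro sum.cong refl) simp
    also have "\<dots> = of_nat (CARD('a) ^ (n * P))" by (simp add: Psi0 card_Xv)
    finally show ?thesis by (simp add: Sr_one)
  qed
  also have "(\<Sum>j\<in>{1..N - m}. \<Sum>v\<in>Wj N j. G v) =
             (\<Sum>j\<in>{1..N - m}. of_nat (CARD('a) ^ (n * (P - j))) * Sr a n ([:0,1:] ^ j))"
  proof (rule sum.cong[OF refl])
    fix j assume j: "j \<in> {1..N - m}"
    then have j1: "1 \<le> j" and jN: "j \<le> N" and jP: "j \<le> P" using mN rho by (auto simp: N_def m_def)
    have "(\<Sum>v\<in>Wj N j. G v) = (\<Sum>c\<in>Cj j. G (embv N j c))"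
      by (rule sum.reindex_bij_betw[symmetric]) (rule embv_bij[OF j1 jN])
    also have "\<dots> = (\<Sum>c\<in>Cj j. of_nat (CARD('a) ^ (n * (P - j))) * Sar a n c ([:0,1:] ^ j))"
    proof (rule sum.cong[OF refl])
      fix c :: "'a poly" assume c: "c \<in> Cj j"
      then have cB: "c \<in> Bk j" by (simp add: Cj_def)
      have "G (embv N j c) = (\<Sum>x\<in>Xv n P. Psi (\<Sum>w<j. coeff (fquad a n x) (2 * P - 1 - j + w) * coeff c w))"
        unfolding G_def
      proof (rule sum.cong[OF refl], rule arg_cong[where f=Psi])
        fix x :: "nat \<Rightarrow> 'a poly"
        show "(\<Sum>i<N. coeff (fquad a n x) i * embv N j c i) = (\<Sum>w<j. coeff (fquad a n x) (2 * P - 1 - j + w) * coeff c w)"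
          using embv_inner[OF cB jN, of "fquad a n x"] unfolding N_def .
      qed
      also have "\<dots> = of_nat (CARD('a) ^ (n * (P - j))) * (\<Sum>y\<in>Xv n j. Psi (coeff (c * fquad a n y) (j - 1)))"
        by (rule main_j[OF j1 jP cB])
      also have "\<dots> = of_nat (CARD('a) ^ (n * (P - j))) * Sar a n c ([:0,1:] ^ j)"
        by (simp add: Sar_X_pow[OF j1])
      finally show "G (embv N j c) = of_nat (CARD('a) ^ (n * (P - j))) * Sar a n c ([:0,1:] ^ j)" .
    qed
    also have "\<dots> = of_nat (CARD('a) ^ (n * (P - j))) * Sr a n ([:0,1:] ^ j)"
      by (simp add: Sr_X_pow[OF j1] sum_distrib_left)
    finally show "(\<Sum>v\<in>Wj N j. G v) = of_nat (CARD('a) ^ (n * (P - j))) * Sr a n ([:0,1:] ^ j)" .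
  qed
  also have "of_nat (CARD('a) ^ (n * (P - 0))) * Sr a n ([:0,1:] ^ 0) +
             (\<Sum>j\<in>{1..N - m}. of_nat (CARD('a) ^ (n * (P - j))) * Sr a n ([:0,1:] ^ j)) =
             (\<Sum>j=0..P - \<rho> - 1. of_nat (CARD('a) ^ (n * (P - j))) * Sr a n ([:0,1:] ^ j))"
    unfolding NmL by (subst sum.atLeast_Suc_atMost[of 0]) simp_all
  finally show ?thesis unfolding G_def N_def m_def .
qed

theorem lemma3p2:
  fixes a :: "nat \<Rightarrow> 'a::{finite,field}" and n P :: nat and r :: "'a poly"
  assumes "odd CARD('a)"
    and "n \<ge> 1" and "\<forall>i<n. a i \<noteq> 0"
    and "P \<ge> 1" and "lead_coeff r = 1" and "degree r \<le> P"
  shows "Ir a n P r =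
    (if degree r \<le> P - 1 then
       complex_of_real (poly_abs r ^ n * qq TYPE('a) ^ (n + 1) / qq TYPE('a) ^ (2 * P)) *
       (\<Sum>k = 0..P - degree r - 1.
          complex_of_real (qq TYPE('a) ^ (n * k)) * Sr a n ([:0, 1:] ^ (P - degree r - k - 1)))
     else complex_of_real (qq TYPE('a) powr (real_of_int (int P * (int n - 2)))))"
proof -
  have r0: "r \<noteq> 0" using assms(5) by auto
  have q1: "qq TYPE('a) > 1" by (rule qq_gt1)
  have qc: "of_nat (CARD('a) ^ e) = complex_of_real (qq TYPE('a) ^ e)" for e
    by (simp add: qq_def)
  have pr: "poly_abs r = qq TYPE('a) ^ degree r" by (rule poly_abs_nonzero[OF r0])
  show ?thesis
  proof (cases "degree r \<le> P - 1")
    case True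
    define \<rho> where "\<rho> = degree r"
    define L where "L = P - \<rho> - 1"
    have rho: "\<rho> < P" using True assms(4) by (simp add: \<rho>_def)
    have "Ir a n P r = (\<Sum>j=0..L. of_nat (CARD('a) ^ (n * (P - j))) * Sr a n ([:0,1:] ^ j)) /
                       of_real (qq TYPE('a) ^ (2 * P - 1))"
      using Ir_formula[OF r0 assms(4), where N="2 * P - 1" and n=n and a=a] main_sum[OF assms(4) rho, where n=n and a=a] rho
      by (simp add: \<rho>_def L_def)
    also have "\<dots> = (\<Sum>j=0..L. complex_of_real (qq TYPE('a) ^ (n * (P - j)) / qq TYPE('a) ^ (2 * P - 1)) *
                                Sr a n ([:0,1:] ^ j))"
      by (simp add: sum_divide_distrib qq_def)
    also have "\<dots> = (\<Sum>j=0..L. complex_of_real (poly_abs r ^ n * qq TYPE('a) ^ (n + 1) / qq TYPE('a) ^ (2 * P) *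
                                   qq TYPE('a) ^ (n * (L - j))) * Sr a n ([:0,1:] ^ j))"
    proof (rule sum.cong[OF refl])
      fix j assume "j \<in> {0..L}"
      then obtain d where d: "L = j + d" using le_Suc_ex by auto
      have PP: "P = \<rho> + 1 + j + d" using d rho by (simp add: L_def)
      have e: "n * (P - j) + 2 * P = \<rho> * n + (n + 1) + n * (L - j) + (2 * P - 1)"
        using PP d by (simp add: algebra_simps)
      have "qq TYPE('a) ^ (n * (P - j)) * qq TYPE('a) ^ (2 * P) =
            qq TYPE('a) ^ (\<rho> * n) * qq TYPE('a) ^ (n + 1) * qq TYPE('a) ^ (n * (L - j)) * qq TYPE('a) ^ (2 * P - 1)"
        by (simp only: power_add[symmetric] e)
      then have "qq TYPE('a) ^ (n * (P - j)) / qq TYPE('a) ^ (2 * P - 1) =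
            poly_abs r ^ n * qq TYPE('a) ^ (n + 1) / qq TYPE('a) ^ (2 * P) * qq TYPE('a) ^ (n * (L - j))"
        using q1 by (simp add: pr \<rho>_def[symmetric] power_mult[symmetric] field_simps mult.commute)
      then show "complex_of_real (qq TYPE('a) ^ (n * (P - j)) / qq TYPE('a) ^ (2 * P - 1)) * Sr a n ([:0,1:] ^ j) =
                 complex_of_real (poly_abs r ^ n * qq TYPE('a) ^ (n + 1) / qq TYPE('a) ^ (2 * P) *
                                   qq TYPE('a) ^ (n * (L - j))) * Sr a n ([:0,1:] ^ j)"
        by simp
    qed
    also have "\<dots> = complex_of_real (poly_abs r ^ n * qq TYPE('a) ^ (n + 1) / qq TYPE('a) ^ (2 * P)) *
                    (\<Sum>j=0..L. complex_of_real (qq TYPE('a) ^ (n * (L - j))) * Sr a n ([:0,1:] ^ j))"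
      by (simp add: sum_distrib_left mult.assoc)
    also have "(\<Sum>j=0..L. complex_of_real (qq TYPE('a) ^ (n * (L - j))) * Sr a n ([:0,1:] ^ j)) =
               (\<Sum>k=0..L. complex_of_real (qq TYPE('a) ^ (n * k)) * Sr a n ([:0,1:] ^ (P - \<rho> - k - 1)))"
    proof -
      have "(\<Sum>k=0..L. complex_of_real (qq TYPE('a) ^ (n * k)) * Sr a n ([:0,1:] ^ (P - \<rho> - k - 1))) =
            (\<Sum>k=0..L. complex_of_real (qq TYPE('a) ^ (n * (L + 0 - k))) * Sr a n ([:0,1:] ^ (P - \<rho> - (L + 0 - k) - 1)))"
        by (rule sum.atLeastAtMost_rev)
      also have "\<dots> = (\<Sum>j=0..L. complex_of_real (qq TYPE('a) ^ (n * (L - j))) * Sr a n ([:0,1:] ^ j))"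
      proof (rule sum.cong[OF refl])
        fix k assume "k \<in> {0..L}"
        then have "P - \<rho> - (L + 0 - k) - 1 = k" using rho by (auto simp: L_def)
        then show "complex_of_real (qq TYPE('a) ^ (n * (L + 0 - k))) * Sr a n ([:0,1:] ^ (P - \<rho> - (L + 0 - k) - 1)) =
                   complex_of_real (qq TYPE('a) ^ (n * (L - k))) * Sr a n ([:0,1:] ^ k)" by simp
      qed
      finally show ?thesis by simp
    qed
    finally show ?thesis using True by (simp add: \<rho>_def L_def)
  next
    case False
    then have rP: "degree r = P" using assms(4,6) by simp
    define N where "N = 2 * P"
    define G where "G = (\<lambda>v::nat \<Rightarrow> 'a. \<Sum>x\<in>Xv n P. Psi (\<Sum>i<N. coeff (fquad a n x) i * v i))"
    have finV: "finite (PiE {..<N} (\<lambda>_. UNIV :: 'a set))" by (rule finite_PiE) simp_all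
    have "Ir a n P r = (\<Sum>v\<in>PiE {..<N} (\<lambda>_. UNIV). (if \<forall>i<N. v i = 0 then G v else 0)) / of_real (qq TYPE('a) ^ N)"
    proof -
      have PN: "P + degree r = N" using rP by (simp add: N_def)
      have Irf: "Ir a n P r =
        (\<Sum>v\<in>PiE {..<N} (\<lambda>_. UNIV).
          (if \<forall>i<P + degree r. v i = 0
           then \<Sum>x\<in>Xv n P. Psi (\<Sum>i<N. coeff (fquad a n x) i * v i) else 0)) / of_real (qq TYPE('a) ^ N)"
        by (rule Ir_formula[OF r0 assms(4)]) (simp_all add: PN[symmetric] rP N_def)
      show ?thesis unfolding G_def using Irf by (simp only: PN)
    qed
    also have "(\<Sum>v\<in>PiE {..<N} (\<lambda>_. UNIV). (if \<forall>i<N. v i = 0 then G v else 0)) =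
               (\<Sum>v\<in>{v\<in>PiE {..<N} (\<lambda>_. UNIV). \<forall>i<N. v i = 0}. G v)"
      by (rule sum.inter_filter[symmetric]) (rule finV)
    also have "\<dots> = G (restrict (\<lambda>_. 0) {..<N}) + (\<Sum>j\<in>{1..N - N}. \<Sum>v\<in>Wj N j. G v)"
      by (rule V0_decomp) simp
    also have "\<dots> = of_nat (CARD('a) ^ (n * P))"
    proof -
      have "G (restrict (\<lambda>_. 0) {..<N}) = (\<Sum>x\<in>(Xv n P :: (nat \<Rightarrow> 'a poly) set). Psi (0::'a))"
        unfolding G_def by (intro sum.cong refl) simp
      also have "\<dots> = of_nat (CARD('a) ^ (n * P))" by (simp add: Psi0 card_Xv)
      finally show ?thesis by simp
    qed
    finally have I: "Ir a n P r = complex_of_real (qq TYPE('a) ^ (n * P) / qq TYPE('a) ^ (2 * P))"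
      by (simp add: qq_def N_def)
    have "real_of_int (int P * (int n - 2)) = real (n * P) - real (2 * P)"
      by (simp add: algebra_simps)
    then have "qq TYPE('a) powr (real_of_int (int P * (int n - 2))) = qq TYPE('a) ^ (n * P) / qq TYPE('a) ^ (2 * P)"
      using q1 by (simp only: powr_diff powr_realpow)
    then show ?thesis using False I by simp
  qed
qed

end
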